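(* There is an algorithm which, given as input an automatic structure for a semigroup $S$ (without an assignment of generators), decides whether $S$ is right cancellative.
   Context: Let $A$ be a finite alphabet, $\$ \notin A$, and let $\delta$ send a pair of words over $A$ to the word over $(A\cup\{\$\})\times(A\cup\{\$\})$ obtained by padding the shorter word on the right with $\$$ and reading both letter by letter. A synchronous automaton recognises a relation $R$ if it accepts exactly $\delta(R)$. A pre-automatic structure $\Gamma$ consists of a finite alphabet $A$, a finite automaton recognising $L\subseteq A^*$, a synchronous automaton recognising $L_=\subseteq L\times L$, and for each $a\in A$ a synchronous automaton recognising $L_a\subseteq L\times L$. An interpretation with respect to a semigroup $S$ is a morphism $\sigma:A^*\to S$ with $\sigma(L)=S$ such that for $u,v\in L$: $(u,v)\in L_=$ iff $\sigma(u)=\sigma(v)$, and $(u,v)\in L_a$ iff $\sigma(ua)=\sigma(v)$. $\Gamma$ is an automatic structure for $S$ if it admits an interpretation with respect to $S$; it is input to an algorithm as its finite collection of automata. A semigroup is right cancellative if $xs=ys$ implies $x=y$ for all $x,y,s$. *)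

theory Defs
  imports Main "HOL-Library.Nat_Bijection"
begin

datatype recf =
    Zero
  | Succ
  | Proj nat
  | Comp recf "recf list"
  | Prim recf recf
  | Mn recf

inductive eval :: "recf \<Rightarrow> nat list \<Rightarrow> nat \<Rightarrow> bool" where
  eval_Zero: "eval Zero xs 0"
| eval_Succ: "eval Succ (x # xs) (Suc x)"
| eval_Proj: "i < length xs \<Longrightarrow> eval (Proj i) xs (xs ! i)"
| eval_Comp: "list_all2 (\<lambda>g y. eval g xs y) gs ys \<Longrightarrow> eval f ys r \<Longrightarrow> eval (Comp f gs) xs r"
| eval_Prim0: "eval f xs r \<Longrightarrow> eval (Prim f g) (0 # xs) r"
| eval_PrimS: "eval (Prim f g) (n # xs) r \<Longrightarrow> eval g (n # r # xs) r'
      \<Longrightarrow> eval (Prim f g) (Suc n # xs) r'"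
| eval_Mn: "eval f (n # xs) 0 \<Longrightarrow> (\<forall>m<n. \<exists>r. eval f (m # xs) r \<and> r > 0)
      \<Longrightarrow> eval (Mn f) xs n"

text \<open>A (nondeterministic) finite automaton over letters of type 'l:
  (initial states, final states, transitions). States are natural numbers.\<close>
type_synonym 'l nfa = "nat list \<times> nat list \<times> (nat \<times> 'l \<times> nat) list"

fun nfa_reach :: "(nat \<times> 'l \<times> nat) list \<Rightarrow> nat set \<Rightarrow> 'l list \<Rightarrow> nat set" where
  "nfa_reach T Q [] = Q"
| "nfa_reach T Q (a # w) = nfa_reach T {q'. \<exists>q\<in>Q. (q, a, q') \<in> set T} w"

definition nfa_accepts :: "'l nfa \<Rightarrow> 'l list \<Rightarrow> bool" where
  "nfa_accepts M w = (case M of (I, F, T) \<Rightarrow> nfa_reach T (set I) w \<inter> set F \<noteq> {})"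

definition nfa_lang :: "'l nfa \<Rightarrow> 'l list set" where
  "nfa_lang M = {w. nfa_accepts M w}"

text \<open>Letters of synchronous automata: pairs over A \<union> {$}; None plays the role of $.\<close>
type_synonym pletter = "nat option \<times> nat option"

definition conv :: "nat list \<Rightarrow> nat list \<Rightarrow> pletter list" where
  "conv u v = zip (map Some u @ replicate (length v - length u) None)
                  (map Some v @ replicate (length u - length v) None)"

definition sync_rel :: "pletter nfa \<Rightarrow> (nat list \<times> nat list) set" where
  "sync_rel M = {(u, v). conv u v \<in> nfa_lang M}"

text \<open>The alphabet is A = {0..<k}. The structure consists of k, an automaton for L,
  a synchronous automaton for L_=, and synchronous automata for L_a, a < k.\<close>
datatype pre_struct = PAS (alph: nat) (aut_L: "nat nfa") (aut_eq: "pletter nfa")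
                          (aut_mult: "pletter nfa list")

definition pre_automatic :: "pre_struct \<Rightarrow> bool" where
  "pre_automatic \<Gamma> \<longleftrightarrow>
     length (aut_mult \<Gamma>) = alph \<Gamma>
   \<and> nfa_lang (aut_L \<Gamma>) \<subseteq> lists {..<alph \<Gamma>}
   \<and> nfa_lang (aut_eq \<Gamma>) \<subseteq> (\<lambda>(u, v). conv u v) ` (nfa_lang (aut_L \<Gamma>) \<times> nfa_lang (aut_L \<Gamma>))
   \<and> (\<forall>a < alph \<Gamma>. nfa_lang (aut_mult \<Gamma> ! a)
         \<subseteq> (\<lambda>(u, v). conv u v) ` (nfa_lang (aut_L \<Gamma>) \<times> nfa_lang (aut_L \<Gamma>)))"

definition semigroup_on :: "'a set \<Rightarrow> ('a \<Rightarrow> 'a \<Rightarrow> 'a) \<Rightarrow> bool" where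
  "semigroup_on S mult \<longleftrightarrow>
     (\<forall>x\<in>S. \<forall>y\<in>S. mult x y \<in> S)
   \<and> (\<forall>x\<in>S. \<forall>y\<in>S. \<forall>z\<in>S. mult (mult x y) z = mult x (mult y z))"

definition right_cancellative :: "'a set \<Rightarrow> ('a \<Rightarrow> 'a \<Rightarrow> 'a) \<Rightarrow> bool" where
  "right_cancellative S mult \<longleftrightarrow> (\<forall>x\<in>S. \<forall>y\<in>S. \<forall>s\<in>S. mult x s = mult y s \<longrightarrow> x = y)"

definition is_interpretation :: "pre_struct \<Rightarrow> 'a set \<Rightarrow> ('a \<Rightarrow> 'a \<Rightarrow> 'a) \<Rightarrow> (nat list \<Rightarrow> 'a) \<Rightarrow> bool" where
  "is_interpretation \<Gamma> S mult \<sigma> \<longleftrightarrow>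
     (let A = {..<alph \<Gamma>}; L = nfa_lang (aut_L \<Gamma>) in
        (\<forall>w \<in> lists A. w \<noteq> [] \<longrightarrow> \<sigma> w \<in> S)
      \<and> (\<forall>u \<in> lists A. \<forall>v \<in> lists A. u \<noteq> [] \<longrightarrow> v \<noteq> [] \<longrightarrow> \<sigma> (u @ v) = mult (\<sigma> u) (\<sigma> v))
      \<and> [] \<notin> L
      \<and> \<sigma> ` L = S
      \<and> (\<forall>u\<in>L. \<forall>v\<in>L. (u, v) \<in> sync_rel (aut_eq \<Gamma>) \<longleftrightarrow> \<sigma> u = \<sigma> v)
      \<and> (\<forall>a\<in>A. \<forall>u\<in>L. \<forall>v\<in>L. (u, v) \<in> sync_rel (aut_mult \<Gamma> ! a) \<longleftrightarrow> \<sigma> (u @ [a]) = \<sigma> v))"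

definition automatic_structure_for :: "pre_struct \<Rightarrow> 'a set \<Rightarrow> ('a \<Rightarrow> 'a \<Rightarrow> 'a) \<Rightarrow> bool" where
  "automatic_structure_for \<Gamma> S mult \<longleftrightarrow> pre_automatic \<Gamma> \<and> (\<exists>\<sigma>. is_interpretation \<Gamma> S mult \<sigma>)"

definition enc_opt :: "nat option \<Rightarrow> nat" where
  "enc_opt x = (case x of None \<Rightarrow> 0 | Some n \<Rightarrow> Suc n)"

definition enc_nfa :: "('l \<Rightarrow> nat) \<Rightarrow> 'l nfa \<Rightarrow> nat" where
  "enc_nfa el M = (case M of (I, F, T) \<Rightarrow>
     list_encode [list_encode I, list_encode F,
                  list_encode (map (\<lambda>(p, a, q). list_encode [p, el a, q]) T)])"

definition enc_pletter :: "pletter \<Rightarrow> nat" where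
  "enc_pletter x = prod_encode (enc_opt (fst x), enc_opt (snd x))"

definition enc_struct :: "pre_struct \<Rightarrow> nat" where
  "enc_struct \<Gamma> = list_encode [alph \<Gamma>, enc_nfa id (aut_L \<Gamma>), enc_nfa enc_pletter (aut_eq \<Gamma>),
                                list_encode (map (enc_nfa enc_pletter) (aut_mult \<Gamma>))]"

end

theory Submission
  imports Defs
begin

definition recn :: "nat \<Rightarrow> (nat list \<Rightarrow> nat) \<Rightarrow> bool" where
  "recn n g \<longleftrightarrow> (\<exists>f. \<forall>xs. length xs = n \<longrightarrow> eval f xs (g xs))"

lemma recn_ext: "recn n g \<Longrightarrow> (\<And>xs. length xs = n \<Longrightarrow> g xs = g' xs) \<Longrightarrow> recn n g'"
  unfolding recn_def by metis

lemma recn_proj: "i < n \<Longrightarrow> recn n (\<lambda>xs. xs ! i)"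
  unfolding recn_def by (auto intro!: exI[of _ "Proj i"] eval_Proj)

lemma recn_zero: "recn n (\<lambda>_. 0)"
  unfolding recn_def by (auto intro!: exI[of _ Zero] eval_Zero)

lemma list_all2_choice:
  assumes "\<forall>h\<in>set hs. \<exists>f. P h f"
  shows "\<exists>fs. list_all2 (\<lambda>h f. P h f) hs fs"
  using assms
proof (induction hs)
  case Nil then show ?case by auto
next
  case (Cons h hs)
  then obtain f fs where "P h f" "list_all2 (\<lambda>h f. P h f) hs fs" by auto
  then show ?case by (auto intro!: exI[of _ "f # fs"])
qed

lemma recn_comp:
  assumes g: "recn m g" and hs: "\<forall>h\<in>set hs. recn n h" and len: "length hs = m"
  shows "recn n (\<lambda>xs. g (map (\<lambda>h. h xs) hs))"
proof -
  obtain f where f: "\<And>ys. length ys = m \<Longrightarrow> eval f ys (g ys)" using g unfolding recn_def by auto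
  have "\<forall>h\<in>set hs. \<exists>f. \<forall>xs. length xs = n \<longrightarrow> eval f xs (h xs)" using hs unfolding recn_def by auto
  from list_all2_choice[OF this] obtain fs
    where fs: "list_all2 (\<lambda>h f. \<forall>xs. length xs = n \<longrightarrow> eval f xs (h xs)) hs fs"
    by (elim exE)
  show ?thesis unfolding recn_def
  proof (intro exI allI impI)
    fix xs :: "nat list" assume l: "length xs = n"
    have "list_all2 (\<lambda>g y. eval g xs y) fs (map (\<lambda>h. h xs) hs)"
      using fs l unfolding list_all2_conv_all_nth by simp
    moreover have "eval f (map (\<lambda>h. h xs) hs) (g (map (\<lambda>h. h xs) hs))"
      using f len by simp
    ultimately show "eval (Comp f fs) xs (g (map (\<lambda>h. h xs) hs))"
      by (rule eval_Comp)
  qed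
qed

lemma recn_succ: "recn n g \<Longrightarrow> recn n (\<lambda>xs. Suc (g xs))"
proof -
  assume "recn n g"
  have "recn 1 (\<lambda>xs. Suc (hd xs))" unfolding recn_def
    by (auto intro!: exI[of _ Succ] simp: length_Suc_conv eval_Succ)
  from recn_comp[OF this, of "[g]" n] \<open>recn n g\<close> show ?thesis by simp
qed

lemma recn_prim:
  assumes b: "recn n b" and s: "recn (Suc (Suc n)) s"
  shows "recn (Suc n) (\<lambda>xs. rec_nat (b (tl xs)) (\<lambda>i r. s (i # r # tl xs)) (hd xs))"
proof -
  obtain fb where fb: "\<And>ys. length ys = n \<Longrightarrow> eval fb ys (b ys)" using b unfolding recn_def by auto
  obtain fs where fs: "\<And>ys. length ys = Suc (Suc n) \<Longrightarrow> eval fs ys (s ys)" using s unfolding recn_def by auto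
  have main: "eval (Prim fb fs) (m # ys) (rec_nat (b ys) (\<lambda>i r. s (i # r # ys)) m)" if "length ys = n" for m ys
  proof (induction m)
    case 0 then show ?case using fb[OF that] by (simp add: eval_Prim0)
  next
    case (Suc m)
    have "eval fs (m # rec_nat (b ys) (\<lambda>i r. s (i # r # ys)) m # ys) (s (m # rec_nat (b ys) (\<lambda>i r. s (i # r # ys)) m # ys))"
      using fs that by simp
    with Suc show ?case by (simp add: eval_PrimS)
  qed
  show ?thesis unfolding recn_def
  proof (intro exI allI impI)
    fix xs :: "nat list" assume "length xs = Suc n"
    then obtain m ys where "xs = m # ys" "length ys = n" by (cases xs) auto
    then show "eval (Prim fb fs) xs (rec_nat (b (tl xs)) (\<lambda>i r. s (i # r # tl xs)) (hd xs))"
      using main by simp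
  qed
qed

lemma recn_comp1: "recn 1 g \<Longrightarrow> recn n a \<Longrightarrow> recn n (\<lambda>xs. g [a xs])"
  using recn_comp[of 1 g "[a]" n] by simp
lemma recn_comp2: "recn 2 g \<Longrightarrow> recn n a \<Longrightarrow> recn n b \<Longrightarrow> recn n (\<lambda>xs. g [a xs, b xs])"
  using recn_comp[of 2 g "[a, b]" n] by simp
lemma recn_comp3: "recn 3 g \<Longrightarrow> recn n a \<Longrightarrow> recn n b \<Longrightarrow> recn n c \<Longrightarrow> recn n (\<lambda>xs. g [a xs, b xs, c xs])"
  using recn_comp[of 3 g "[a, b, c]" n] by (simp add: numeral_3_eq_3)

lemma len2: "length xs = 2 \<longleftrightarrow> (\<exists>x y. xs = [x, y])"
  by (auto simp: length_Suc_conv numeral_2_eq_2)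
lemma len3: "length xs = 3 \<longleftrightarrow> (\<exists>x y z. xs = [x, y, z])"
  by (auto simp: length_Suc_conv numeral_3_eq_3)
lemma len1: "length xs = 1 \<longleftrightarrow> (\<exists>x. xs = [x])"
  by (auto simp: length_Suc_conv)

lemma rn_add: "rec_nat y (\<lambda>i r. Suc r) x = x + y" by (induction x) auto
lemma rn_mult: "rec_nat 0 (\<lambda>i r. r + y) x = x * y" by (induction x) auto
lemma rn_pred: "rec_nat 0 (\<lambda>i r. i) x = x - 1" by (induction x) auto
lemma rn_sub: "rec_nat y (\<lambda>i r. r - 1) x = y - x" by (induction x) auto
lemma rn_tri: "rec_nat 0 (\<lambda>i r. r + Suc i) x = triangle x" by (induction x) auto

lemma recn_prim':
  assumes b: "recn n b" and s: "recn (Suc (Suc n)) s"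
    and eq: "\<And>x ys. length ys = n \<Longrightarrow> rec_nat (b ys) (\<lambda>i r. s (i # r # ys)) x = g (x # ys)"
    and m: "m = Suc n"
  shows "recn m g"
  unfolding m using recn_prim[OF b s] by (rule recn_ext) (auto simp: length_Suc_conv eq)

lemma recn_add: "recn 2 (\<lambda>xs. xs ! 0 + xs ! 1)"
  apply (rule recn_prim'[where n=1 and b="\<lambda>ys. ys ! 0" and s="\<lambda>ys. Suc (ys ! 1)"])
  apply (intro recn_proj recn_succ; simp)
  apply (intro recn_proj recn_succ; simp)
  subgoal for x ys by (induction x) (auto simp: len1)
  by simp

lemma recn_add2: "recn n a \<Longrightarrow> recn n b \<Longrightarrow> recn n (\<lambda>xs. a xs + b xs)"
  using recn_comp2[OF recn_add, of n a b] by simp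

lemma recn_mult: "recn 2 (\<lambda>xs. xs ! 0 * xs ! 1)"
  apply (rule recn_prim'[where n=1 and b="\<lambda>ys. 0" and s="\<lambda>ys. ys ! 1 + ys ! 2"])
  apply (rule recn_zero)
  apply (intro recn_proj recn_add2; simp)
  subgoal for x ys by (induction x) (auto simp: len1)
  by simp

lemma recn_mult2: "recn n a \<Longrightarrow> recn n b \<Longrightarrow> recn n (\<lambda>xs. a xs * b xs)"
  using recn_comp2[OF recn_mult, of n a b] by simp

lemma recn_pred: "recn 1 (\<lambda>xs. xs ! 0 - 1)"
  apply (rule recn_prim'[where n=0 and b="\<lambda>ys. 0" and s="\<lambda>ys. ys ! 0"])
  apply (rule recn_zero)
  apply (intro recn_proj; simp)
  subgoal for x ys by (induction x) auto
  by simp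

lemma recn_pred2: "recn n a \<Longrightarrow> recn n (\<lambda>xs. a xs - 1)"
  using recn_comp1[OF recn_pred, of n a] by simp

lemma recn_subr: "recn 2 (\<lambda>xs. xs ! 1 - xs ! 0)"
  apply (rule recn_prim'[where n=1 and b="\<lambda>ys. ys ! 0" and s="\<lambda>ys. ys ! 1 - 1"])
  apply (intro recn_proj; simp)
  apply (intro recn_proj recn_pred2; simp)
  subgoal for x ys by (induction x) (auto simp: len1)
  by simp

lemma recn_sub2: "recn n a \<Longrightarrow> recn n b \<Longrightarrow> recn n (\<lambda>xs. a xs - b xs)"
  using recn_comp2[OF recn_subr, of n b a] by simp

lemma recn_tri: "recn 1 (\<lambda>xs. triangle (xs ! 0))"
  apply (rule recn_prim'[where n=0 and b="\<lambda>ys. 0" and s="\<lambda>ys. ys ! 1 + Suc (ys ! 0)"])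
  apply (rule recn_zero)
  apply (intro recn_proj recn_add2 recn_succ; simp)
  subgoal for x ys by (induction x) auto
  by simp

lemma recn_tri2: "recn n a \<Longrightarrow> recn n (\<lambda>xs. triangle (a xs))"
  using recn_comp1[OF recn_tri, of n a] by simp

lemma recn_const: "recn n (\<lambda>_. c)"
  by (induction c) (auto intro: recn_zero recn_succ)

lemma recn_pe2: "recn n a \<Longrightarrow> recn n b \<Longrightarrow> recn n (\<lambda>xs. prod_encode (a xs, b xs))"
  unfolding prod_encode_def by (simp add: recn_add2 recn_tri2)

definition sdiag :: "nat \<Rightarrow> nat" where
  "sdiag n = rec_nat 0 (\<lambda>t r. r + (1 - (triangle (Suc t) - n))) n"

lemma recn_sdiag: "recn 1 (\<lambda>xs. sdiag (xs ! 0))"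
proof -
  have "recn 2 (\<lambda>xs. rec_nat 0 (\<lambda>t r. r + (1 - (triangle (Suc t) - xs ! 1))) (xs ! 0))"
    apply (rule recn_prim'[where n=1 and b="\<lambda>ys. 0" and s="\<lambda>ys. ys ! 1 + (1 - (triangle (Suc (ys ! 0)) - ys ! 2))"])
    apply (rule recn_zero)
    apply (intro recn_proj recn_add2 recn_sub2 recn_const recn_tri2 recn_succ; simp)
    subgoal for x ys by (auto simp: len1)
    by simp
  from recn_comp2[OF this, of 1 "\<lambda>xs. xs ! 0" "\<lambda>xs. xs ! 0"] show ?thesis
    by (simp add: recn_proj sdiag_def)
qed

lemma triangle_mono: "a \<le> b \<Longrightarrow> triangle a \<le> triangle b"
  by (induction b) (auto simp: le_Suc_eq)

lemma triangle_ge: "s \<le> triangle s"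
  by (induction s) auto

lemma sum_ind_min: "rec_nat 0 (\<lambda>t r. r + (if t < s then 1 else 0)) n = min n s"
  by (induction n) auto

lemma sdiag_pe: "sdiag (prod_encode (m, k)) = m + k"
proof -
  let ?n = "triangle (m + k) + m"
  have "\<And>t. (1 - (triangle (Suc t) - ?n)) = (if t < m + k then 1 else 0)"
  proof -
    fix t
    show "(1 - (triangle (Suc t) - ?n)) = (if t < m + k then 1 else 0)"
    proof (cases "t < m + k")
      case True
      then have "triangle (Suc t) \<le> triangle (m + k)" by (intro triangle_mono) auto
      then show ?thesis using True by auto
    next
      case False
      then have "triangle (Suc (m + k)) \<le> triangle (Suc t)" by (intro triangle_mono) auto
      then show ?thesis using False by auto
    qed
  qed
  then have "sdiag ?n = min ?n (m + k)"
    unfolding sdiag_def using sum_ind_min[of "m+k" ?n] by simp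
  moreover have "m + k \<le> ?n" using triangle_ge[of "m+k"] by simp
  ultimately show ?thesis by (simp add: prod_encode_def)
qed

definition pfst :: "nat \<Rightarrow> nat" where "pfst n = fst (prod_decode n)"
definition psnd :: "nat \<Rightarrow> nat" where "psnd n = snd (prod_decode n)"

lemma pfst_pe[simp]: "pfst (prod_encode (a, b)) = a" by (simp add: pfst_def)
lemma psnd_pe[simp]: "psnd (prod_encode (a, b)) = b" by (simp add: psnd_def)

lemma pfst_alt: "pfst n = n - triangle (sdiag n)"
proof -
  obtain a b where "n = prod_encode (a, b)" by (metis prod_decode_inverse surj_pair)
  then show ?thesis by (simp add: sdiag_pe) (simp add: prod_encode_def)
qed

lemma psnd_alt: "psnd n = sdiag n - pfst n"
proof -
  obtain a b where "n = prod_encode (a, b)" by (metis prod_decode_inverse surj_pair)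
  then show ?thesis by (simp add: sdiag_pe)
qed

definition rec1 :: "(nat \<Rightarrow> nat) \<Rightarrow> bool" where
  "rec1 g \<longleftrightarrow> recn 1 (\<lambda>xs. g (xs ! 0))"

lemma rec1_id: "rec1 (\<lambda>x. x)" unfolding rec1_def by (rule recn_proj) simp
lemma rec1_const: "rec1 (\<lambda>x. c)" unfolding rec1_def by (rule recn_const)
lemma rec1_add: "rec1 a \<Longrightarrow> rec1 b \<Longrightarrow> rec1 (\<lambda>x. a x + b x)"
  unfolding rec1_def by (rule recn_add2)
lemma rec1_sub: "rec1 a \<Longrightarrow> rec1 b \<Longrightarrow> rec1 (\<lambda>x. a x - b x)"
  unfolding rec1_def by (rule recn_sub2)
lemma rec1_mult: "rec1 a \<Longrightarrow> rec1 b \<Longrightarrow> rec1 (\<lambda>x. a x * b x)"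
  unfolding rec1_def by (rule recn_mult2)
lemma rec1_Suc: "rec1 a \<Longrightarrow> rec1 (\<lambda>x. Suc (a x))"
  unfolding rec1_def by (rule recn_succ)
lemma rec1_pe: "rec1 a \<Longrightarrow> rec1 b \<Longrightarrow> rec1 (\<lambda>x. prod_encode (a x, b x))"
  unfolding rec1_def by (rule recn_pe2)
lemma rec1_comp: "rec1 g \<Longrightarrow> rec1 h \<Longrightarrow> rec1 (\<lambda>x. g (h x))"
  unfolding rec1_def using recn_comp1[of "\<lambda>xs. g (xs ! 0)" 1 "\<lambda>xs. h (xs ! 0)"] by simp
lemma rec1_sdiag: "rec1 sdiag" unfolding rec1_def by (rule recn_sdiag)
lemma rec1_tri: "rec1 triangle" unfolding rec1_def by (rule recn_tri)

lemma rec1_pfst0: "rec1 pfst"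
  unfolding pfst_alt[abs_def]
  by (intro rec1_sub rec1_id rec1_comp[OF rec1_tri] rec1_sdiag)
lemma rec1_psnd0: "rec1 psnd"
  unfolding psnd_alt[abs_def]
  by (intro rec1_sub rec1_sdiag rec1_pfst0)
lemma rec1_pfst: "rec1 a \<Longrightarrow> rec1 (\<lambda>x. pfst (a x))" by (rule rec1_comp[OF rec1_pfst0])
lemma rec1_psnd: "rec1 a \<Longrightarrow> rec1 (\<lambda>x. psnd (a x))" by (rule rec1_comp[OF rec1_psnd0])

lemma rec1_natrec:
  assumes n: "rec1 n" and a: "rec1 a"
    and s: "rec1 (\<lambda>q. s (pfst q) (pfst (psnd q)) (psnd (psnd q)))"
  shows "rec1 (\<lambda>x. rec_nat (a x) (s x) (n x))"
proof -
  have s3: "recn 3 (\<lambda>zs. s (zs ! 2) (zs ! 0) (zs ! 1))"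
  proof -
    have "recn 3 (\<lambda>zs. prod_encode (zs ! 2, prod_encode (zs ! 0, zs ! 1)))"
      by (intro recn_pe2 recn_proj) auto
    from recn_comp1[OF s[unfolded rec1_def] this] show ?thesis by simp
  qed
  have "recn 2 (\<lambda>xs. rec_nat (a (xs ! 1)) (s (xs ! 1)) (xs ! 0))"
    apply (rule recn_prim'[where n=1 and b="\<lambda>ys. a (ys ! 0)" and s="\<lambda>ys. s (ys ! 2) (ys ! 0) (ys ! 1)"])
    using a[unfolded rec1_def] apply simp
    using s3 apply (simp add: numeral_3_eq_3)
    subgoal for x ys by (auto simp: len1)
    by simp
  from recn_comp2[OF this, of 1 "\<lambda>xs. n (xs ! 0)" "\<lambda>xs. xs ! 0"] n show ?thesis
    unfolding rec1_def by (simp add: recn_proj)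
qed

definition recP :: "(nat \<Rightarrow> bool) \<Rightarrow> bool" where
  "recP P \<longleftrightarrow> rec1 (\<lambda>x. if P x then 1 else 0)"

lemma rec1_if:
  assumes "recP P" "rec1 a" "rec1 b"
  shows "rec1 (\<lambda>x. if P x then a x else b x)"
proof -
  have "rec1 (\<lambda>x. a x * (if P x then 1 else 0) + b x * (1 - (if P x then 1 else 0)))"
    using assms unfolding recP_def by (intro rec1_add rec1_mult rec1_sub rec1_const)
  then show ?thesis by (simp add: if_distrib cong: if_cong)
qed

lemma recP_eq: "rec1 a \<Longrightarrow> rec1 b \<Longrightarrow> recP (\<lambda>x. a x = b x)"
proof -
  assume "rec1 a" "rec1 b"
  then have "rec1 (\<lambda>x. 1 - ((a x - b x) + (b x - a x)))"
    by (intro rec1_add rec1_sub rec1_const)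
  then show ?thesis unfolding recP_def
    by (rule back_subst[where P=rec1]) (auto simp: fun_eq_iff)
qed

lemma recP_less: "rec1 a \<Longrightarrow> rec1 b \<Longrightarrow> recP (\<lambda>x. a x < b x)"
proof -
  assume "rec1 a" "rec1 b"
  then have "rec1 (\<lambda>x. 1 - (Suc (a x) - b x))"
    by (intro rec1_Suc rec1_sub rec1_const)
  then show ?thesis unfolding recP_def
    by (rule back_subst[where P=rec1]) (auto simp: fun_eq_iff)
qed

lemma recP_le: "rec1 a \<Longrightarrow> rec1 b \<Longrightarrow> recP (\<lambda>x. a x \<le> b x)"
proof -
  assume "rec1 a" "rec1 b"
  then have "rec1 (\<lambda>x. 1 - (a x - b x))"
    by (intro rec1_sub rec1_const)
  then show ?thesis unfolding recP_def
    by (rule back_subst[where P=rec1]) (auto simp: fun_eq_iff)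
qed

lemma recP_not: "recP P \<Longrightarrow> recP (\<lambda>x. \<not> P x)"
proof -
  assume "recP P"
  then have "rec1 (\<lambda>x. 1 - (if P x then 1 else 0))" unfolding recP_def by (intro rec1_sub rec1_const)
  then show ?thesis unfolding recP_def
    by (rule back_subst[where P=rec1]) (auto simp: fun_eq_iff)
qed

lemma recP_conj: "recP P \<Longrightarrow> recP Q \<Longrightarrow> recP (\<lambda>x. P x \<and> Q x)"
proof -
  assume "recP P" "recP Q"
  then have "rec1 (\<lambda>x. (if P x then 1 else 0) * (if Q x then 1 else 0))" unfolding recP_def by (intro rec1_mult)
  then show ?thesis unfolding recP_def
    by (rule back_subst[where P=rec1]) (auto simp: fun_eq_iff)
qed

lemma recP_disj: "recP P \<Longrightarrow> recP Q \<Longrightarrow> recP (\<lambda>x. P x \<or> Q x)"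
proof -
  assume "recP P" "recP Q"
  then have "recP (\<lambda>x. \<not> (\<not> P x \<and> \<not> Q x))" by (intro recP_not recP_conj)
  then show ?thesis by simp
qed

lemma recP_comp: "recP P \<Longrightarrow> rec1 h \<Longrightarrow> recP (\<lambda>x. P (h x))"
  unfolding recP_def by (rule rec1_comp)

lemma rn_bex: "rec_nat 0 (\<lambda>i r. if P i then 1 else r) m = (if \<exists>i<m. P i then 1 else (0::nat))"
  by (induction m) (auto simp: less_Suc_eq)

lemma recP_bex:
  assumes P: "recP (\<lambda>q. P (pfst q) (psnd q))" and n: "rec1 n"
  shows "recP (\<lambda>x. \<exists>i<n x. P x i)"
proof -
  have P2: "recP (\<lambda>q. P (pfst q) (pfst (psnd q)))"
    using recP_comp[OF P, of "\<lambda>q. prod_encode (pfst q, pfst (psnd q))"]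
    by (simp add: rec1_pe rec1_pfst rec1_psnd rec1_id)
  have "rec1 (\<lambda>x. rec_nat 0 (\<lambda>i r. if P x i then 1 else r) (n x))"
    by (rule rec1_natrec[OF n rec1_const]) (intro rec1_if P2 rec1_const rec1_psnd rec1_id)
  then show ?thesis unfolding recP_def rn_bex .
qed

lemma recP_ball:
  assumes P: "recP (\<lambda>q. P (pfst q) (psnd q))" and n: "rec1 n"
  shows "recP (\<lambda>x. \<forall>i<n x. P x i)"
proof -
  have "recP (\<lambda>x. \<not> (\<exists>i<n x. \<not> P x i))"
    by (intro recP_not recP_bex[OF _ n] recP_not[OF P])
  then show ?thesis by simp
qed

lemma recP_const: "recP (\<lambda>x. c)"
  unfolding recP_def by (cases c) (simp_all add: rec1_const)

lemma rec1_max: "rec1 a \<Longrightarrow> rec1 b \<Longrightarrow> rec1 (\<lambda>x. max (a x) (b x))"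
  unfolding max_def by (intro rec1_if recP_le)

lemmas rec_intros = rec1_id rec1_const rec1_add rec1_sub rec1_mult rec1_Suc rec1_pe rec1_pfst rec1_psnd
  rec1_natrec rec1_if recP_eq recP_less recP_le recP_not recP_conj recP_disj recP_bex recP_ball recP_const rec1_max

lemma rec1_comp2: "rec1 (\<lambda>q. F (pfst q) (psnd q)) \<Longrightarrow> rec1 a \<Longrightarrow> rec1 b \<Longrightarrow> rec1 (\<lambda>x. F (a x) (b x))"
  using rec1_comp[of "\<lambda>q. F (pfst q) (psnd q)" "\<lambda>x. prod_encode (a x, b x)"] by (simp add: rec1_pe)
lemma recP_comp2: "recP (\<lambda>q. F (pfst q) (psnd q)) \<Longrightarrow> rec1 a \<Longrightarrow> rec1 b \<Longrightarrow> recP (\<lambda>x. F (a x) (b x))"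
  using recP_comp[of "\<lambda>q. F (pfst q) (psnd q)" "\<lambda>x. prod_encode (a x, b x)"] by (simp add: rec1_pe)
lemma rec1_comp3: "rec1 (\<lambda>q. F (pfst q) (pfst (psnd q)) (psnd (psnd q))) \<Longrightarrow> rec1 a \<Longrightarrow> rec1 b \<Longrightarrow> rec1 c
   \<Longrightarrow> rec1 (\<lambda>x. F (a x) (b x) (c x))"
  using rec1_comp[of "\<lambda>q. F (pfst q) (pfst (psnd q)) (psnd (psnd q))" "\<lambda>x. prod_encode (a x, prod_encode (b x, c x))"]
  by (simp add: rec1_pe)

definition hdc :: "nat \<Rightarrow> nat" where "hdc l = pfst (l - 1)"
definition tlc :: "nat \<Rightarrow> nat" where "tlc l = psnd (l - 1)"
definition drc :: "nat \<Rightarrow> nat \<Rightarrow> nat" where "drc l i = rec_nat l (\<lambda>_ r. tlc r) i"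
definition nthc :: "nat \<Rightarrow> nat \<Rightarrow> nat" where "nthc l i = hdc (drc l i)"
definition lenc :: "nat \<Rightarrow> nat" where "lenc l = rec_nat 0 (\<lambda>i acc. if drc l i = 0 then acc else Suc acc) l"
definition consc :: "nat \<Rightarrow> nat \<Rightarrow> nat" where "consc x l = Suc (prod_encode (x, l))"
definition memc :: "nat \<Rightarrow> nat \<Rightarrow> bool" where "memc x l \<longleftrightarrow> (\<exists>i<lenc l. nthc l i = x)"

lemma consc_enc: "consc x (list_encode xs) = list_encode (x # xs)" by (simp add: consc_def)

lemma tlc_enc: "tlc (list_encode xs) = list_encode (tl xs)"
proof (cases xs)
  case Nil
  have "prod_decode (prod_encode (0, 0)) = (0, 0)" by (rule prod_encode_inverse)
  then have "prod_decode 0 = (0, 0)" by (simp add: prod_encode_def)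
  then show ?thesis using Nil by (simp add: tlc_def psnd_def)
qed (simp add: tlc_def)

lemma hdc_enc: "xs \<noteq> [] \<Longrightarrow> hdc (list_encode xs) = hd xs"
  by (cases xs) (auto simp: hdc_def)

lemma drc_enc: "drc (list_encode xs) i = list_encode (drop i xs)"
proof (induction i)
  case (Suc i)
  have "drc (list_encode xs) (Suc i) = tlc (drc (list_encode xs) i)" by (simp add: drc_def)
  then show ?case using Suc by (simp add: tlc_enc drop_Suc del: drop_tl) (metis drop_Suc tl_drop)
qed (simp add: drc_def)

lemma nthc_enc: "i < length xs \<Longrightarrow> nthc (list_encode xs) i = xs ! i"
  by (simp add: nthc_def drc_enc hdc_enc hd_drop_conv_nth)

lemma length_le_enc: "length xs \<le> list_encode xs"
proof (induction xs)
  case (Cons x xs) then show ?case using le_prod_encode_2[of "list_encode xs" x] by simp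
qed simp

lemma elem_le_enc: "x \<in> set xs \<Longrightarrow> x \<le> list_encode xs"
proof (induction xs)
  case (Cons y xs) then show ?case
    using le_prod_encode_2[of "list_encode xs" y] le_prod_encode_1[of y "list_encode xs"] by auto
qed simp

lemma enc_zero: "list_encode ys = 0 \<longleftrightarrow> ys = []" by (cases ys) auto

lemma rn_count: "rec_nat 0 (\<lambda>i acc. if \<not> i < s then acc else Suc acc) n = min n s"
  by (induction n) auto

lemma lenc_enc: "lenc (list_encode xs) = length xs"
proof -
  have "\<And>i. (drc (list_encode xs) i = 0) = (\<not> i < length xs)"
    by (auto simp: drc_enc enc_zero)
  then have "lenc (list_encode xs) = rec_nat 0 (\<lambda>i acc. if \<not> i < length xs then acc else Suc acc) (list_encode xs)"
    unfolding lenc_def by simp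
  then show ?thesis using rn_count length_le_enc[of xs] by (simp add: min_absorb2)
qed

lemma memc_enc: "memc x (list_encode xs) \<longleftrightarrow> x \<in> set xs"
  by (auto simp: memc_def lenc_enc nthc_enc in_set_conv_nth)

lemma rec1_tlc: "rec1 a \<Longrightarrow> rec1 (\<lambda>x. tlc (a x))"
  unfolding tlc_def by (intro rec_intros)
lemma rec1_hdc: "rec1 a \<Longrightarrow> rec1 (\<lambda>x. hdc (a x))"
  unfolding hdc_def by (intro rec_intros)
lemma rec1_drc: "rec1 a \<Longrightarrow> rec1 b \<Longrightarrow> rec1 (\<lambda>x. drc (a x) (b x))"
  by (rule rec1_comp2[of drc]) (unfold drc_def, intro rec_intros rec1_tlc)
lemma rec1_nthc: "rec1 a \<Longrightarrow> rec1 b \<Longrightarrow> rec1 (\<lambda>x. nthc (a x) (b x))"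
  unfolding nthc_def by (intro rec_intros rec1_hdc rec1_drc)
lemma rec1_lenc: "rec1 a \<Longrightarrow> rec1 (\<lambda>x. lenc (a x))"
  by (rule rec1_comp[of lenc]) (unfold lenc_def, intro rec_intros rec1_drc)
lemma rec1_consc: "rec1 a \<Longrightarrow> rec1 b \<Longrightarrow> rec1 (\<lambda>x. consc (a x) (b x))"
  unfolding consc_def by (intro rec_intros)
lemma recP_memc: "rec1 a \<Longrightarrow> rec1 b \<Longrightarrow> recP (\<lambda>x. memc (a x) (b x))"
  by (rule recP_comp2[of memc]) (unfold memc_def, intro rec_intros rec1_lenc rec1_nthc)

lemmas rec_intros2 = rec_intros rec1_tlc rec1_hdc rec1_drc rec1_nthc rec1_lenc rec1_consc recP_memc

definition stepc :: "nat \<Rightarrow> nat \<Rightarrow> nat \<Rightarrow> nat" where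
  "stepc tc a qc = rec_nat 0 (\<lambda>j acc. if nthc (nthc tc j) 1 = a \<and> memc (nthc (nthc tc j) 0) qc
       then consc (nthc (nthc tc j) 2) acc else acc) (lenc tc)"

definition acc_c :: "nat \<Rightarrow> nat \<Rightarrow> bool" where
  "acc_c fc qc \<longleftrightarrow> (\<exists>i<lenc qc. memc (nthc qc i) fc)"

lemma rec1_stepc: "rec1 a \<Longrightarrow> rec1 b \<Longrightarrow> rec1 c \<Longrightarrow> rec1 (\<lambda>x. stepc (a x) (b x) (c x))"
  by (rule rec1_comp3[of stepc]) (unfold stepc_def, intro rec_intros2)

lemma recP_acc_c: "rec1 a \<Longrightarrow> rec1 b \<Longrightarrow> recP (\<lambda>x. acc_c (a x) (b x))"
  by (rule recP_comp2[of acc_c]) (unfold acc_c_def, intro rec_intros2)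

definition encT :: "(nat \<times> nat \<times> nat) list \<Rightarrow> nat" where
  "encT T = list_encode (map (\<lambda>(p, a, q). list_encode [p, a, q]) T)"

lemma nthc_encT:
  assumes "j < length T" "T ! j = (p, b, q)"
  shows "nthc (nthc (encT T) j) 0 = p" "nthc (nthc (encT T) j) 1 = b" "nthc (nthc (encT T) j) 2 = q"
proof -
  have "nthc (encT T) j = list_encode [p, b, q]"
    using assms by (simp add: encT_def nthc_enc del: list_encode.simps)
  then show "nthc (nthc (encT T) j) 0 = p" "nthc (nthc (encT T) j) 1 = b" "nthc (nthc (encT T) j) 2 = q"
    using nthc_enc[of _ "[p, b, q]"] by (simp_all del: list_encode.simps)
qed

lemma lenc_encT: "lenc (encT T) = length T"
  by (simp add: encT_def lenc_enc)

lemma stepc_correct: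
  "\<exists>L. stepc (encT T) a (list_encode Q) = list_encode L \<and> set L = {q'. \<exists>q\<in>set Q. (q, a, q') \<in> set T}"
proof -
  let ?f = "\<lambda>j acc. if nthc (nthc (encT T) j) 1 = a \<and> memc (nthc (nthc (encT T) j) 0) (list_encode Q)
       then consc (nthc (nthc (encT T) j) 2) acc else acc"
  have gen: "m \<le> length T \<Longrightarrow> \<exists>L. rec_nat 0 ?f m = list_encode L
      \<and> set L = {q'. \<exists>j<m. \<exists>p. T ! j = (p, a, q') \<and> p \<in> set Q}" for m
  proof (induction m)
    case 0 then show ?case by (auto intro!: exI[of _ "[]"])
  next
    case (Suc m)
    then obtain L where L: "rec_nat 0 ?f m = list_encode L"
      "set L = {q'. \<exists>j<m. \<exists>p. T ! j = (p, a, q') \<and> p \<in> set Q}" by auto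
    obtain p b q where t: "T ! m = (p, b, q)" by (cases "T ! m") auto
    have m: "m < length T" using Suc by simp
    note n = nthc_encT[OF m t]
    have r: "rec_nat 0 ?f (Suc m) = (if b = a \<and> p \<in> set Q then list_encode (q # L) else list_encode L)"
      using L(1) by (simp only: old.nat.simps n memc_enc consc_enc)
    have e: "{q'. \<exists>j<Suc m. \<exists>p. T ! j = (p, a, q') \<and> p \<in> set Q} =
          {q'. \<exists>j<m. \<exists>p. T ! j = (p, a, q') \<and> p \<in> set Q} \<union> (if b = a \<and> p \<in> set Q then {q} else {})"
      using t by (auto simp: less_Suc_eq)
    show ?case
    proof (cases "b = a \<and> p \<in> set Q")
      case True
      then show ?thesis using r e L(2) by (intro exI[of _ "q # L"]) auto
    next
      case False
      then show ?thesis using r e L(2) by (intro exI[of _ L]) auto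
    qed
  qed
  from gen[of "length T"] obtain L where L: "rec_nat 0 ?f (length T) = list_encode L"
      "set L = {q'. \<exists>j<length T. \<exists>p. T ! j = (p, a, q') \<and> p \<in> set Q}" by auto
  have "{q'. \<exists>j<length T. \<exists>p. T ! j = (p, a, q') \<and> p \<in> set Q} = {q'. \<exists>q\<in>set Q. (q, a, q') \<in> set T}"
    by (auto simp: in_set_conv_nth) (metis nth_mem)
  then show ?thesis using L unfolding stepc_def lenc_encT by auto
qed

lemma nfa_reach_snoc: "nfa_reach T Q (w @ [a]) = {q'. \<exists>q\<in>nfa_reach T Q w. (q, a, q') \<in> set T}"
  by (induction w arbitrary: Q) auto

lemma run_correct:
  assumes G: "\<And>p. p < length x \<Longrightarrow> G p = x ! p"
  shows "m \<le> length x \<Longrightarrow> \<exists>L. rec_nat (list_encode I) (\<lambda>p Q. stepc (encT T) (G p) Q) m = list_encode L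
      \<and> set L = nfa_reach T (set I) (take m x)"
proof (induction m)
  case 0 then show ?case by auto
next
  case (Suc m)
  then obtain L where L: "rec_nat (list_encode I) (\<lambda>p Q. stepc (encT T) (G p) Q) m = list_encode L"
      "set L = nfa_reach T (set I) (take m x)" by auto
  obtain L' where L': "stepc (encT T) (x ! m) (list_encode L) = list_encode L'"
     "set L' = {q'. \<exists>q\<in>set L. (q, x ! m, q') \<in> set T}" using stepc_correct by blast
  have "take (Suc m) x = take m x @ [x ! m]" using Suc.prems by (simp add: take_Suc_conv_app_nth)
  then show ?case using L L' G[of m] Suc.prems by (auto simp: nfa_reach_snoc)
qed

lemma acc_c_correct: "acc_c (list_encode F) (list_encode L) \<longleftrightarrow> set L \<inter> set F \<noteq> {}"
  by (auto simp: acc_c_def lenc_enc nthc_enc memc_enc in_set_conv_nth) (metis IntI empty_iff nth_mem)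

lemma nthc3: "nthc (list_encode [a, b, c]) 0 = a" "nthc (list_encode [a, b, c]) 1 = b"
   "nthc (list_encode [a, b, c]) 2 = c" "nthc (list_encode [a, b, c]) (Suc 0) = b"
  using nthc_enc[of _ "[a, b, c]"] by (simp_all del: list_encode.simps)

lemma enc_nfa_id: "enc_nfa id (I, F, T) = list_encode [list_encode I, list_encode F, encT T]"
proof -
  have "(\<lambda>(p, a, q). list_encode [p, id a, q]) = (\<lambda>(p :: nat, a :: nat, q :: nat). list_encode [p, a, q])"
    by auto
  then show ?thesis by (simp add: enc_nfa_def encT_def)
qed

lemma nfa_code_correct:
  fixes M :: "nat nfa"
  assumes G: "\<And>p. p < length x \<Longrightarrow> G p = x ! p"
  shows "acc_c (nthc (enc_nfa id M) 1)
           (rec_nat (nthc (enc_nfa id M) 0) (\<lambda>p Q. stepc (nthc (enc_nfa id M) 2) (G p) Q) (length x))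
         \<longleftrightarrow> nfa_accepts M x"
proof -
  obtain I F T where M: "M = (I, F, T)" by (cases M) auto
  obtain L where L: "rec_nat (list_encode I) (\<lambda>p Q. stepc (encT T) (G p) Q) (length x) = list_encode L"
      "set L = nfa_reach T (set I) x" using run_correct[OF G, of "length x" I T] by auto
  show ?thesis unfolding M enc_nfa_id using L
    by (simp add: nthc3 acc_c_correct nfa_accepts_def del: list_encode.simps)
qed

definition mapM :: "('l \<Rightarrow> nat) \<Rightarrow> 'l nfa \<Rightarrow> nat nfa" where
  "mapM e M = (case M of (I, F, T) \<Rightarrow> (I, F, map (\<lambda>(p, a, q). (p, e a, q)) T))"

lemma enc_nfa_map: "enc_nfa e M = enc_nfa id (mapM e M)"
proof -
  obtain I F T where M: "M = (I, F, T)" by (cases M) auto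
  have "map (\<lambda>(p, a, q). list_encode [p, a, q]) (map (\<lambda>(p, a, q). (p, e a, q)) T)
      = map (\<lambda>(p, a, q). list_encode [p, e a, q]) T"
    by (induction T) (auto simp del: list_encode.simps)
  then show ?thesis unfolding M enc_nfa_def mapM_def id_def prod.case by (simp only: )
qed

lemma nfa_reach_map:
  assumes "inj e"
  shows "nfa_reach (map (\<lambda>(p, a, q). (p, e a, q)) T) Q (map e w) = nfa_reach T Q w"
proof (induction w arbitrary: Q)
  case (Cons a w)
  have "{q'. \<exists>q\<in>Q. (q, e a, q') \<in> set (map (\<lambda>(p, a, q). (p, e a, q)) T)} = {q'. \<exists>q\<in>Q. (q, a, q') \<in> set T}"
  proof (intro Collect_cong iffI)
    fix q' assume "\<exists>q\<in>Q. (q, e a, q') \<in> set (map (\<lambda>(p, a, q). (p, e a, q)) T)"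
    then obtain q b where "q \<in> Q" "(q, b, q') \<in> set T" "e b = e a" by auto
    then show "\<exists>q\<in>Q. (q, a, q') \<in> set T" using assms by (auto dest: injD)
  next
    fix q' assume "\<exists>q\<in>Q. (q, a, q') \<in> set T"
    then obtain q where "q \<in> Q" "(q, a, q') \<in> set T" by auto
    then show "\<exists>q\<in>Q. (q, e a, q') \<in> set (map (\<lambda>(p, a, q). (p, e a, q)) T)"
      by (auto intro!: bexI[of _ q] image_eqI[of _ _ "(q, a, q')"])
  qed
  then show ?case using Cons by simp
qed simp

lemma nfa_accepts_map: "inj e \<Longrightarrow> nfa_accepts (mapM e M) (map e w) \<longleftrightarrow> nfa_accepts M w"
  by (cases M) (simp add: nfa_accepts_def mapM_def nfa_reach_map)

lemma inj_enc_opt: "inj enc_opt"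
  by (rule injI) (auto simp: enc_opt_def split: option.splits)

lemma inj_enc_pletter: "inj enc_pletter"
  by (rule injI) (auto simp: enc_pletter_def inj_enc_opt[THEN inj_eq] prod_eq_iff)

definition opt :: "nat list \<Rightarrow> nat \<Rightarrow> nat option" where
  "opt u p = (if p < length u then Some (u ! p) else None)"

lemma length_conv: "length (conv u v) = max (length u) (length v)"
  by (simp add: conv_def)

lemma nth_conv: "p < max (length u) (length v) \<Longrightarrow> conv u v ! p = (opt u p, opt v p)"
  by (auto simp: conv_def opt_def nth_append)

definition optc :: "nat \<Rightarrow> nat \<Rightarrow> nat" where
  "optc uc p = (if p < lenc uc then Suc (nthc uc p) else 0)"

definition accL :: "nat \<Rightarrow> nat \<Rightarrow> bool" where
  "accL mc uc \<longleftrightarrow> acc_c (nthc mc 1) (rec_nat (nthc mc 0) (\<lambda>p Q. stepc (nthc mc 2) (nthc uc p) Q) (lenc uc))"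

definition accS :: "nat \<Rightarrow> nat \<Rightarrow> nat \<Rightarrow> bool" where
  "accS mc uc wc \<longleftrightarrow> acc_c (nthc mc 1) (rec_nat (nthc mc 0)
      (\<lambda>p Q. stepc (nthc mc 2) (prod_encode (optc uc p, optc wc p)) Q) (max (lenc uc) (lenc wc)))"

lemma recP_comp3: "recP (\<lambda>q. F (pfst q) (pfst (psnd q)) (psnd (psnd q))) \<Longrightarrow> rec1 a \<Longrightarrow> rec1 b \<Longrightarrow> rec1 c
   \<Longrightarrow> recP (\<lambda>x. F (a x) (b x) (c x))"
  using recP_comp[of "\<lambda>q. F (pfst q) (pfst (psnd q)) (psnd (psnd q))" "\<lambda>x. prod_encode (a x, prod_encode (b x, c x))"]
  by (simp add: rec1_pe)

lemma rec1_optc: "rec1 a \<Longrightarrow> rec1 b \<Longrightarrow> rec1 (\<lambda>x. optc (a x) (b x))"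
  by (rule rec1_comp2[of optc]) (unfold optc_def, intro rec_intros2)

lemma recP_accL: "rec1 a \<Longrightarrow> rec1 b \<Longrightarrow> recP (\<lambda>x. accL (a x) (b x))"
  by (rule recP_comp2[of accL]) (unfold accL_def, intro rec_intros2 rec1_stepc recP_acc_c)

lemma recP_accS: "rec1 a \<Longrightarrow> rec1 b \<Longrightarrow> rec1 c \<Longrightarrow> recP (\<lambda>x. accS (a x) (b x) (c x))"
  by (rule recP_comp3[of accS]) (unfold accS_def, intro rec_intros2 rec1_stepc recP_acc_c rec1_optc)

lemma accL_correct: "accL (enc_nfa id M) (list_encode u) \<longleftrightarrow> nfa_accepts M u"
  unfolding accL_def lenc_enc by (rule nfa_code_correct) (simp add: nthc_enc)

lemma optc_enc: "optc (list_encode u) p = enc_opt (opt u p)"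
  by (simp add: optc_def opt_def lenc_enc nthc_enc enc_opt_def)

lemma accS_correct: "accS (enc_nfa enc_pletter M) (list_encode u) (list_encode w) \<longleftrightarrow> (u, w) \<in> sync_rel M"
proof -
  let ?x = "map enc_pletter (conv u w)"
  have l: "length ?x = max (length u) (length w)" by (simp add: length_conv)
  have "accS (enc_nfa id (mapM enc_pletter M)) (list_encode u) (list_encode w) \<longleftrightarrow> nfa_accepts (mapM enc_pletter M) ?x"
    unfolding accS_def lenc_enc l[symmetric]
    by (rule nfa_code_correct) (simp add: optc_enc nth_conv l enc_pletter_def length_conv)
  also have "\<dots> \<longleftrightarrow> nfa_accepts M (conv u w)" by (rule nfa_accepts_map[OF inj_enc_pletter])
  finally show ?thesis by (simp add: enc_nfa_map[symmetric] sync_rel_def nfa_lang_def)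
qed

definition Witc :: "nat \<Rightarrow> nat \<Rightarrow> nat \<Rightarrow> nat \<Rightarrow> nat \<Rightarrow> bool" where
  "Witc c a i j l \<longleftrightarrow> accL (nthc c 1) i \<and> accL (nthc c 1) j \<and> accL (nthc c 1) l
     \<and> accS (nthc (nthc c 3) a) i l \<and> accS (nthc (nthc c 3) a) j l \<and> \<not> accS (nthc c 2) i j"

definition Wit :: "pre_struct \<Rightarrow> nat \<Rightarrow> nat list \<Rightarrow> nat list \<Rightarrow> nat list \<Rightarrow> bool" where
  "Wit \<Gamma> a u v w \<longleftrightarrow> u \<in> nfa_lang (aut_L \<Gamma>) \<and> v \<in> nfa_lang (aut_L \<Gamma>) \<and> w \<in> nfa_lang (aut_L \<Gamma>)
     \<and> (u, w) \<in> sync_rel (aut_mult \<Gamma> ! a) \<and> (v, w) \<in> sync_rel (aut_mult \<Gamma> ! a)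
     \<and> (u, v) \<notin> sync_rel (aut_eq \<Gamma>)"

lemma nthc_struct:
  "nthc (enc_struct \<Gamma>) 0 = alph \<Gamma>"
  "nthc (enc_struct \<Gamma>) 1 = enc_nfa id (aut_L \<Gamma>)"
  "nthc (enc_struct \<Gamma>) 2 = enc_nfa enc_pletter (aut_eq \<Gamma>)"
  "a < length (aut_mult \<Gamma>) \<Longrightarrow> nthc (nthc (enc_struct \<Gamma>) 3) a = enc_nfa enc_pletter (aut_mult \<Gamma> ! a)"
  unfolding enc_struct_def
  using nthc_enc[of _ "[alph \<Gamma>, enc_nfa id (aut_L \<Gamma>), enc_nfa enc_pletter (aut_eq \<Gamma>),
                                list_encode (map (enc_nfa enc_pletter) (aut_mult \<Gamma>))]"]
  by (simp_all del: list_encode.simps add: nthc_enc)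

lemma Witc_correct:
  assumes "a < length (aut_mult \<Gamma>)"
  shows "Witc (enc_struct \<Gamma>) a (list_encode u) (list_encode v) (list_encode w) \<longleftrightarrow> Wit \<Gamma> a u v w"
  unfolding Witc_def Wit_def nthc_struct(4)[OF assms] nthc_struct(1-3) accL_correct accS_correct
  by (simp add: nfa_lang_def)

primrec runp :: "(nat \<times> 'l \<times> nat) list \<Rightarrow> nat set \<Rightarrow> (nat \<Rightarrow> 'l option) \<Rightarrow> nat \<Rightarrow> nat set" where
  "runp T Q G 0 = Q"
| "runp T Q G (Suc p) = (case G p of None \<Rightarrow> runp T Q G p
      | Some a \<Rightarrow> {q'. \<exists>q\<in>runp T Q G p. (q, a, q') \<in> set T})"

lemma runp_word:
  assumes G1: "\<And>p. p < length x \<Longrightarrow> G p = Some (x ! p)" and G2: "\<And>p. length x \<le> p \<Longrightarrow> G p = None"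
    and N: "length x \<le> N"
  shows "runp T Q G N = nfa_reach T Q x"
proof -
  have A: "m \<le> length x \<Longrightarrow> runp T Q G m = nfa_reach T Q (take m x)" for m
  proof (induction m)
    case (Suc m)
    then have "take (Suc m) x = take m x @ [x ! m]" by (simp add: take_Suc_conv_app_nth)
    then show ?case using Suc G1[of m] by (simp add: nfa_reach_snoc)
  qed simp
  have B: "runp T Q G (length x + d) = runp T Q G (length x)" for d
    by (induction d) (simp_all add: G2)
  have "N = length x + (N - length x)" using N by simp
  then have "runp T Q G N = runp T Q G (length x)" using B by metis
  then show ?thesis using A[of "length x"] by simp
qed

lemma runp_cut:
  assumes G': "\<And>p. G' p = (if p < i then G p else G (p + d))"
    and eq: "runp T Q G i = runp T Q G (i + d)"
  shows "runp T Q G' (i + k) = runp T Q G (i + k + d)"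
proof -
  have A: "p \<le> i \<Longrightarrow> runp T Q G' p = runp T Q G p" for p
  proof (induction p)
    case (Suc p)
    have "G' p = G p" using Suc.prems G'[of p] by simp
    moreover have "runp T Q G' p = runp T Q G p" using Suc by simp
    ultimately show ?case by (simp split: option.split)
  qed simp
  show ?thesis
  proof (induction k)
    case 0 then show ?case using A eq by simp
  next
    case (Suc k)
    have "G' (i + k) = G (i + k + d)" by (simp add: G')
    then show ?case using Suc by (simp add: add.commute add.left_commute split: option.split)
  qed
qed

lemma opt_cut:
  assumes "i \<le> j"
  shows "opt (take i u @ drop j u) p = (if p < i then opt u p else opt u (p + (j - i)))"
  using assms by (auto simp: opt_def nth_append min_def) (simp_all add: add.commute)

definition pairG :: "nat list \<Rightarrow> nat list \<Rightarrow> nat \<Rightarrow> pletter option" where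
  "pairG u w p = (if opt u p = None \<and> opt w p = None then None else Some (opt u p, opt w p))"

lemma pairG_cut:
  assumes "i \<le> j"
  shows "pairG (take i u @ drop j u) (take i w @ drop j w) p = (if p < i then pairG u w p else pairG u w (p + (j - i)))"
  unfolding pairG_def opt_cut[OF assms] by simp

lemma rp_opt: "length u \<le> N \<Longrightarrow> runp T Q (opt u) N = nfa_reach T Q u"
  by (rule runp_word) (auto simp: opt_def)

lemma rp_pair: "max (length u) (length w) \<le> N \<Longrightarrow> runp T Q (pairG u w) N = nfa_reach T Q (conv u w)"
  by (rule runp_word) (auto simp: pairG_def length_conv nth_conv opt_def)

definition D where
  "D IL TL Ia Ta IE TE u v w p = (runp TL (set IL) (opt u) p, runp TL (set IL) (opt v) p, runp TL (set IL) (opt w) p,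
      runp Ta (set Ia) (pairG u w) p, runp Ta (set Ia) (pairG v w) p, runp TE (set IE) (pairG u v) p)"

definition WitM :: "nat nfa \<Rightarrow> pletter nfa \<Rightarrow> pletter nfa \<Rightarrow> nat list \<Rightarrow> nat list \<Rightarrow> nat list \<Rightarrow> bool" where
  "WitM ML Ma ME u v w \<longleftrightarrow> u \<in> nfa_lang ML \<and> v \<in> nfa_lang ML \<and> w \<in> nfa_lang ML
     \<and> (u, w) \<in> sync_rel Ma \<and> (v, w) \<in> sync_rel Ma \<and> (u, v) \<notin> sync_rel ME"

lemma WitM_D:
  assumes l: "length u \<le> N" "length v \<le> N" "length w \<le> N"
    and l': "length u' \<le> N'" "length v' \<le> N'" "length w' \<le> N'"
    and eq: "D IL TL Ia Ta IE TE u v w N = D IL TL Ia Ta IE TE u' v' w' N'"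
  shows "WitM (IL, FL, TL) (Ia, Fa, Ta) (IE, FE, TE) u v w = WitM (IL, FL, TL) (Ia, Fa, Ta) (IE, FE, TE) u' v' w'"
proof -
  have "nfa_reach TL (set IL) u = nfa_reach TL (set IL) u'"
    "nfa_reach TL (set IL) v = nfa_reach TL (set IL) v'"
    "nfa_reach TL (set IL) w = nfa_reach TL (set IL) w'"
    "nfa_reach Ta (set Ia) (conv u w) = nfa_reach Ta (set Ia) (conv u' w')"
    "nfa_reach Ta (set Ia) (conv v w) = nfa_reach Ta (set Ia) (conv v' w')"
    "nfa_reach TE (set IE) (conv u v) = nfa_reach TE (set IE) (conv u' v')"
    using eq l l' by (simp_all add: D_def rp_opt rp_pair[symmetric])
  then show ?thesis
    by (simp add: WitM_def nfa_lang_def sync_rel_def nfa_accepts_def)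
qed

lemma length_cut: "i \<le> j \<Longrightarrow> length x \<le> N \<Longrightarrow> j \<le> N \<Longrightarrow> length (take i x @ drop j x) \<le> N - (j - i)"
  by auto

lemma D_cut:
  assumes ij: "i < j" "j \<le> N" and eq: "D IL TL Ia Ta IE TE u v w i = D IL TL Ia Ta IE TE u v w j"
  shows "D IL TL Ia Ta IE TE (take i u @ drop j u) (take i v @ drop j v) (take i w @ drop j w) (N - (j - i))
       = D IL TL Ia Ta IE TE u v w N"
proof -
  let ?d = "j - i"
  have N1: "N - (j - i) = i + (N - j)" and N2: "N = i + (N - j) + (j - i)" "j = i + (j - i)" using ij by auto
  have c: "\<And>T Q G G'. (\<And>p. G' p = (if p < i then G p else G (p + ?d))) \<Longrightarrow> runp T Q G i = runp T Q G j
     \<Longrightarrow> runp T Q G' (N - ?d) = runp T Q G N"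
    unfolding N1 by (subst (2) N2(1), rule runp_cut, auto simp: N2(2)[symmetric])
  have ij': "i \<le> j" using ij by simp
  show ?thesis using eq unfolding D_def
    by (simp add: c opt_cut[OF ij'] pairG_cut[OF ij'])
qed

definition tgt :: "(nat \<times> 'l \<times> nat) list \<Rightarrow> nat set" where
  "tgt T = (\<lambda>(p, a, q). q) ` set T"

lemma runp_sub: "runp T Q G p \<subseteq> Q \<union> tgt T"
  by (induction p) (auto simp: tgt_def split: option.splits, force)

lemma card_st: "card (set I \<union> tgt T) \<le> length I + length T"
proof -
  have "card (tgt T) \<le> length T" unfolding tgt_def
    using card_image_le[of "set T" "\<lambda>(p, a, q). q"] card_length[of T] by simp
  then show ?thesis using card_Un_le[of "set I" "tgt T"] card_length[of I] by simp
qed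

lemma card_X:
  "card (Pow (set IL \<union> tgt TL) \<times> Pow (set IL \<union> tgt TL) \<times> Pow (set IL \<union> tgt TL) \<times>
         Pow (set Ia \<union> tgt Ta) \<times> Pow (set Ia \<union> tgt Ta) \<times> Pow (set IE \<union> tgt TE))
   \<le> 2 ^ (3 * (length IL + length TL) + 2 * (length Ia + length Ta) + (length IE + length TE))"
  (is "card ?X \<le> _")
proof -
  have fin: "finite (tgt T)" for T :: "(nat \<times> 'l \<times> nat) list" by (simp add: tgt_def)
  have "card ?X = 2 ^ (card (set IL \<union> tgt TL) + card (set IL \<union> tgt TL) + card (set IL \<union> tgt TL)
       + (card (set Ia \<union> tgt Ta) + card (set Ia \<union> tgt Ta)) + card (set IE \<union> tgt TE))"
    by (simp add: card_cartesian_product card_Pow fin power_add mult.assoc)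
  also have "\<dots> \<le> 2 ^ (3 * (length IL + length TL) + 2 * (length Ia + length Ta) + (length IE + length TE))"
    using card_st[of IL TL] card_st[of Ia Ta] card_st[of IE TE] by (intro power_increasing) auto
  finally show ?thesis .
qed

lemma short_wit_aux:
  fixes IL FL :: "nat list" and TL :: "(nat \<times> nat \<times> nat) list"
    and Ia Fa IE FE :: "nat list" and Ta TE :: "(nat \<times> pletter \<times> nat) list"
  defines "K \<equiv> 2 ^ (3 * (length IL + length TL) + 2 * (length Ia + length Ta) + (length IE + length TE))"
  shows "max (length u) (max (length v) (length w)) \<le> n \<Longrightarrow> WitM (IL, FL, TL) (Ia, Fa, Ta) (IE, FE, TE) u v w
    \<Longrightarrow> \<exists>u' v' w'. WitM (IL, FL, TL) (Ia, Fa, Ta) (IE, FE, TE) u' v' w'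
          \<and> length u' \<le> K \<and> length v' \<le> K \<and> length w' \<le> K"
proof (induction n arbitrary: u v w rule: less_induct)
  case (less n)
  define N where "N = max (length u) (max (length v) (length w))"
  show ?case
  proof (cases "N \<le> K")
    case True then show ?thesis using less.prems by (auto simp: N_def)
  next
    case False
    let ?f = "D IL TL Ia Ta IE TE u v w"
    let ?X = "Pow (set IL \<union> tgt TL) \<times> Pow (set IL \<union> tgt TL) \<times> Pow (set IL \<union> tgt TL) \<times>
         Pow (set Ia \<union> tgt Ta) \<times> Pow (set Ia \<union> tgt Ta) \<times> Pow (set IE \<union> tgt TE)"
    have range: "?f ` {0..N} \<subseteq> ?X"
      using runp_sub[of TL] runp_sub[of Ta] runp_sub[of TE] by (auto simp: D_def) blast+
    have finX: "finite ?X" by (simp add: tgt_def)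
    have cX: "card ?X \<le> K" unfolding K_def by (rule card_X)
    have "\<not> inj_on ?f {0..N}"
    proof
      assume "inj_on ?f {0..N}"
      from card_inj_on_le[OF this range finX] have "Suc N \<le> card ?X" by simp
      with cX False show False by simp
    qed
    then obtain i j where ij: "i \<in> {0..N}" "j \<in> {0..N}" "i \<noteq> j" "?f i = ?f j"
      unfolding inj_on_def by blast
    obtain i' j' where ij': "i' < j'" "j' \<le> N" "?f i' = ?f j'"
    proof (cases "i < j")
      case True then show ?thesis using ij that[of i j] by auto
    next
      case False then show ?thesis using ij that[of j i] by auto
    qed
    let ?c = "\<lambda>x. take i' x @ drop j' x"
    let ?N' = "N - (j' - i')"
    have Dc: "D IL TL Ia Ta IE TE (?c u) (?c v) (?c w) ?N' = ?f N"
      by (rule D_cut[OF ij'])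
    have lc: "length (?c u) \<le> ?N'" "length (?c v) \<le> ?N'" "length (?c w) \<le> ?N'"
      using ij' by (auto simp: N_def intro!: length_cut)
    have lo: "length u \<le> N" "length v \<le> N" "length w \<le> N" by (auto simp: N_def)
    have W: "WitM (IL, FL, TL) (Ia, Fa, Ta) (IE, FE, TE) (?c u) (?c v) (?c w)"
      using WitM_D[OF lc lo Dc] less.prems(2) by simp
    have "N \<le> n" using less.prems(1) by (simp add: N_def)
    then have "?N' < n" using ij' by arith
    moreover have "max (length (?c u)) (max (length (?c v)) (length (?c w))) \<le> ?N'" using lc by simp
    ultimately show ?thesis using less.IH W by blast
  qed
qed

lemma rc_iff:
  assumes sg: "semigroup_on S mult" and pre: "pre_automatic \<Gamma>" and int: "is_interpretation \<Gamma> S mult \<sigma>"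
  shows "right_cancellative S mult \<longleftrightarrow> \<not> (\<exists>a<alph \<Gamma>. \<exists>u v w. Wit \<Gamma> a u v w)"
proof -
  define A where "A = {..<alph \<Gamma>}"
  define L where "L = nfa_lang (aut_L \<Gamma>)"
  have i1: "\<And>w. w \<in> lists A \<Longrightarrow> w \<noteq> [] \<Longrightarrow> \<sigma> w \<in> S"
    and i2: "\<And>u v. u \<in> lists A \<Longrightarrow> v \<in> lists A \<Longrightarrow> u \<noteq> [] \<Longrightarrow> v \<noteq> [] \<Longrightarrow> \<sigma> (u @ v) = mult (\<sigma> u) (\<sigma> v)"
    and i3: "[] \<notin> L" and i4: "\<sigma> ` L = S"
    and i5: "\<And>u v. u \<in> L \<Longrightarrow> v \<in> L \<Longrightarrow> (u, v) \<in> sync_rel (aut_eq \<Gamma>) \<longleftrightarrow> \<sigma> u = \<sigma> v"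
    and i6: "\<And>a u v. a \<in> A \<Longrightarrow> u \<in> L \<Longrightarrow> v \<in> L \<Longrightarrow> (u, v) \<in> sync_rel (aut_mult \<Gamma> ! a) \<longleftrightarrow> \<sigma> (u @ [a]) = \<sigma> v"
    using int unfolding is_interpretation_def Let_def A_def L_def by blast+
  have LA: "L \<subseteq> lists A" using pre unfolding pre_automatic_def L_def A_def by blast
  have closed: "\<And>x y. x \<in> S \<Longrightarrow> y \<in> S \<Longrightarrow> mult x y \<in> S"
    and assoc: "\<And>x y z. x \<in> S \<Longrightarrow> y \<in> S \<Longrightarrow> z \<in> S \<Longrightarrow> mult (mult x y) z = mult x (mult y z)"
    using sg unfolding semigroup_on_def by blast+
  have Wit_iff: "Wit \<Gamma> a u v w \<longleftrightarrow> u \<in> L \<and> v \<in> L \<and> w \<in> L \<and> (u, w) \<in> sync_rel (aut_mult \<Gamma> ! a)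
      \<and> (v, w) \<in> sync_rel (aut_mult \<Gamma> ! a) \<and> (u, v) \<notin> sync_rel (aut_eq \<Gamma>)" for a u v w
    by (simp add: Wit_def L_def)
  have mulsig: "\<sigma> (u @ [a]) = mult (\<sigma> u) (\<sigma> [a])" if "u \<in> L" "a \<in> A" for u a
    using i2[of u "[a]"] that LA i3 by auto
  show ?thesis
  proof
    assume rc: "right_cancellative S mult"
    show "\<not> (\<exists>a<alph \<Gamma>. \<exists>u v w. Wit \<Gamma> a u v w)"
    proof
      assume "\<exists>a<alph \<Gamma>. \<exists>u v w. Wit \<Gamma> a u v w"
      then obtain a u v w where a: "a \<in> A" and W: "Wit \<Gamma> a u v w" by (auto simp: A_def)
      then have uvw: "u \<in> L" "v \<in> L" "w \<in> L" by (auto simp: Wit_iff)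
      have "\<sigma> (u @ [a]) = \<sigma> w" "\<sigma> (v @ [a]) = \<sigma> w" using W uvw i6[OF a] by (auto simp: Wit_iff)
      then have "mult (\<sigma> u) (\<sigma> [a]) = mult (\<sigma> v) (\<sigma> [a])" using mulsig uvw a by simp
      moreover have "\<sigma> u \<in> S" "\<sigma> v \<in> S" "\<sigma> [a] \<in> S" using uvw i4 a i1[of "[a]"] by auto
      ultimately have "\<sigma> u = \<sigma> v" using rc unfolding right_cancellative_def by blast
      then show False using W uvw i5 by (auto simp: Wit_iff)
    qed
  next
    assume nw: "\<not> (\<exists>a<alph \<Gamma>. \<exists>u v w. Wit \<Gamma> a u v w)"
    have single: "x = y" if xS: "x \<in> S" and yS: "y \<in> S" and aA: "a \<in> A"
      and eq: "mult x (\<sigma> [a]) = mult y (\<sigma> [a])" for x y a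
    proof -
      obtain u where u: "u \<in> L" "x = \<sigma> u" using xS i4 by blast
      obtain v where v: "v \<in> L" "y = \<sigma> v" using yS i4 by blast
      have "mult x (\<sigma> [a]) \<in> S" using xS aA closed i1[of "[a]"] by auto
      then obtain w where w: "w \<in> L" "\<sigma> w = mult x (\<sigma> [a])" using i4 by (metis imageE)
      have "(u, w) \<in> sync_rel (aut_mult \<Gamma> ! a)" "(v, w) \<in> sync_rel (aut_mult \<Gamma> ! a)"
        using i6[OF aA] u v w mulsig aA eq by auto
      then have "(u, v) \<in> sync_rel (aut_eq \<Gamma>)"
        using nw u v w aA unfolding Wit_iff by (auto simp: A_def)
      then show ?thesis using i5 u v by auto
    qed
    have gen: "w \<in> lists A \<Longrightarrow> w \<noteq> [] \<Longrightarrow> \<forall>x\<in>S. \<forall>y\<in>S. mult x (\<sigma> w) = mult y (\<sigma> w) \<longrightarrow> x = y" for w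
    proof (induction w rule: rev_induct)
      case Nil then show ?case by simp
    next
      case (snoc a w)
      show ?case
      proof (cases "w = []")
        case True then show ?thesis using single snoc.prems by auto
      next
        case False
        have wA: "w \<in> lists A" "a \<in> A" using snoc.prems by auto
        have sw: "\<sigma> w \<in> S" "\<sigma> [a] \<in> S" using i1 wA False by auto
        have e: "\<sigma> (w @ [a]) = mult (\<sigma> w) (\<sigma> [a])" using i2[of w "[a]"] wA False by auto
        show ?thesis
        proof (intro ballI impI)
          fix x y assume xy: "x \<in> S" "y \<in> S" "mult x (\<sigma> (w @ [a])) = mult y (\<sigma> (w @ [a]))"
          then have "mult (mult x (\<sigma> w)) (\<sigma> [a]) = mult (mult y (\<sigma> w)) (\<sigma> [a])"
            using e assoc sw by simp
          then have "mult x (\<sigma> w) = mult y (\<sigma> w)" using single closed xy sw wA by blast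
          then show "x = y" using snoc.IH wA False xy by blast
        qed
      qed
    qed
    show "right_cancellative S mult" unfolding right_cancellative_def
    proof (intro ballI impI)
      fix x y s assume "x \<in> S" "y \<in> S" "s \<in> S" "mult x s = mult y s"
      moreover obtain w where "w \<in> L" "s = \<sigma> w" using \<open>s \<in> S\<close> i4 by blast
      ultimately show "x = y" using gen[of w] LA i3 by blast
    qed
  qed
qed

lemma sz_le: "length I + length T \<le> 2 * enc_nfa e (I, F, T)"
proof -
  have "list_encode I \<le> enc_nfa e (I, F, T)"
    unfolding enc_nfa_def by (simp del: list_encode.simps add: elem_le_enc)
  moreover have "list_encode (map (\<lambda>(p, a, q). list_encode [p, e a, q]) T) \<le> enc_nfa e (I, F, T)"
    unfolding enc_nfa_def by (simp del: list_encode.simps add: elem_le_enc)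
  moreover have "length (map (\<lambda>(p, a, q). list_encode [p, e a, q]) T) = length T" by simp
  ultimately show ?thesis using length_le_enc[of I] length_le_enc[of "map (\<lambda>(p, a, q). list_encode [p, e a, q]) T"]
    by linarith
qed

lemma struct_le:
  "enc_nfa id (aut_L \<Gamma>) \<le> enc_struct \<Gamma>" "enc_nfa enc_pletter (aut_eq \<Gamma>) \<le> enc_struct \<Gamma>"
  "a < length (aut_mult \<Gamma>) \<Longrightarrow> enc_nfa enc_pletter (aut_mult \<Gamma> ! a) \<le> enc_struct \<Gamma>"
proof -
  show "enc_nfa id (aut_L \<Gamma>) \<le> enc_struct \<Gamma>" "enc_nfa enc_pletter (aut_eq \<Gamma>) \<le> enc_struct \<Gamma>"
    unfolding enc_struct_def by (simp_all del: list_encode.simps add: elem_le_enc)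
  assume a: "a < length (aut_mult \<Gamma>)"
  have "enc_nfa enc_pletter (aut_mult \<Gamma> ! a) \<le> list_encode (map (enc_nfa enc_pletter) (aut_mult \<Gamma>))"
    using a by (intro elem_le_enc) simp
  also have "\<dots> \<le> enc_struct \<Gamma>"
    unfolding enc_struct_def by (simp del: list_encode.simps add: elem_le_enc)
  finally show "enc_nfa enc_pletter (aut_mult \<Gamma> ! a) \<le> enc_struct \<Gamma>" .
qed

lemma short_wit:
  assumes a: "a < length (aut_mult \<Gamma>)" and W: "Wit \<Gamma> a u v w"
  shows "\<exists>u' v' w'. Wit \<Gamma> a u' v' w' \<and> length u' \<le> 2 ^ (12 * enc_struct \<Gamma>)
     \<and> length v' \<le> 2 ^ (12 * enc_struct \<Gamma>) \<and> length w' \<le> 2 ^ (12 * enc_struct \<Gamma>)"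
proof -
  obtain IL FL TL where L: "aut_L \<Gamma> = (IL, FL, TL)" by (cases "aut_L \<Gamma>") auto
  obtain Ia Fa Ta where M: "aut_mult \<Gamma> ! a = (Ia, Fa, Ta)" by (cases "aut_mult \<Gamma> ! a") auto
  obtain IE FE TE where E: "aut_eq \<Gamma> = (IE, FE, TE)" by (cases "aut_eq \<Gamma>") auto
  have WW: "Wit \<Gamma> a x y z = WitM (IL, FL, TL) (Ia, Fa, Ta) (IE, FE, TE) x y z" for x y z
    by (simp add: Wit_def WitM_def L M E)
  define K :: nat where "K = 2 ^ (3 * (length IL + length TL) + 2 * (length Ia + length Ta) + (length IE + length TE))"
  obtain u' v' w' where W': "WitM (IL, FL, TL) (Ia, Fa, Ta) (IE, FE, TE) u' v' w'"
    "length u' \<le> K" "length v' \<le> K" "length w' \<le> K"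
  proof -
    have "WitM (IL, FL, TL) (Ia, Fa, Ta) (IE, FE, TE) u v w" using W WW by simp
    from short_wit_aux[OF order.refl this] show ?thesis using that unfolding K_def by blast
  qed
  have "length IL + length TL \<le> 2 * enc_struct \<Gamma>"
    using sz_le[of IL TL id FL] struct_le(1)[of \<Gamma>] L by simp
  moreover have "length Ia + length Ta \<le> 2 * enc_struct \<Gamma>"
    using sz_le[of Ia Ta enc_pletter Fa] struct_le(3)[OF a] M by simp
  moreover have "length IE + length TE \<le> 2 * enc_struct \<Gamma>"
    using sz_le[of IE TE enc_pletter FE] struct_le(2)[of \<Gamma>] E by simp
  ultimately have "K \<le> 2 ^ (12 * enc_struct \<Gamma>)" unfolding K_def by (intro power_increasing) auto
  then show ?thesis using W' WW by (meson order.trans)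
qed

definition CB :: "nat \<Rightarrow> nat \<Rightarrow> nat" where
  "CB k n = rec_nat 0 (\<lambda>_ r. Suc (prod_encode (k, r))) n"

lemma prod_encode_mono: "a \<le> a' \<Longrightarrow> b \<le> b' \<Longrightarrow> prod_encode (a, b) \<le> prod_encode (a', b')"
  unfolding prod_encode_def using triangle_mono[of "a + b" "a' + b'"] by simp

lemma CB_enc: "u \<in> lists {..<k} \<Longrightarrow> list_encode u \<le> CB k (length u)"
proof (induction u)
  case (Cons x u)
  then have "x \<le> k" "list_encode u \<le> CB k (length u)" by auto
  then show ?case using prod_encode_mono by (simp add: CB_def)
qed (simp add: CB_def)

lemma CB_mono: "n \<le> m \<Longrightarrow> CB k n \<le> CB k m"
proof (induction m)
  case (Suc m)
  have "CB k m \<le> CB k (Suc m)" using le_prod_encode_2[of "CB k m" k] by (simp add: CB_def)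
  then show ?case using Suc by (auto simp: le_Suc_eq)
qed simp

definition pow2 :: "nat \<Rightarrow> nat" where "pow2 x = rec_nat 1 (\<lambda>_ r. r + r) x"
lemma pow2_eq: "pow2 x = 2 ^ x" by (induction x) (simp_all add: pow2_def)

definition Mb :: "nat \<Rightarrow> nat" where "Mb c = Suc (CB (nthc c 0) (pow2 (12 * c)))"

definition Fn :: "nat \<Rightarrow> nat" where
  "Fn c = (if \<exists>a < nthc c 0. \<exists>i < Mb c. \<exists>j < Mb c. \<exists>l < Mb c. Witc c a i j l then 0 else 1)"

lemma rec1_Fn: "rec1 Fn"
  unfolding Fn_def[abs_def] Witc_def Mb_def CB_def pow2_def
  by (intro rec_intros2 recP_accL recP_accS)

lemma Fn_correct:
  assumes sg: "semigroup_on S mult" and as: "automatic_structure_for \<Gamma> S mult"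
  shows "Fn (enc_struct \<Gamma>) = (if right_cancellative S mult then 1 else 0)"
proof -
  from as obtain \<sigma> where pre: "pre_automatic \<Gamma>" and int: "is_interpretation \<Gamma> S mult \<sigma>"
    unfolding automatic_structure_for_def by blast
  let ?c = "enc_struct \<Gamma>"
  have k: "nthc ?c 0 = alph \<Gamma>" "length (aut_mult \<Gamma>) = alph \<Gamma>"
    using nthc_struct(1) pre by (auto simp: pre_automatic_def)
  have LA: "nfa_lang (aut_L \<Gamma>) \<subseteq> lists {..<alph \<Gamma>}" using pre by (simp add: pre_automatic_def)
  have "(\<exists>a < nthc ?c 0. \<exists>i < Mb ?c. \<exists>j < Mb ?c. \<exists>l < Mb ?c. Witc ?c a i j l)
        \<longleftrightarrow> (\<exists>a<alph \<Gamma>. \<exists>u v w. Wit \<Gamma> a u v w)"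
  proof
    assume "\<exists>a < nthc ?c 0. \<exists>i < Mb ?c. \<exists>j < Mb ?c. \<exists>l < Mb ?c. Witc ?c a i j l"
    then obtain a i j l where a: "a < alph \<Gamma>" and W: "Witc ?c a i j l" using k by auto
    have "Wit \<Gamma> a (list_decode i) (list_decode j) (list_decode l)"
      using Witc_correct[of a \<Gamma> "list_decode i" "list_decode j" "list_decode l"] a k W by simp
    then show "\<exists>a<alph \<Gamma>. \<exists>u v w. Wit \<Gamma> a u v w" using a by blast
  next
    assume "\<exists>a<alph \<Gamma>. \<exists>u v w. Wit \<Gamma> a u v w"
    then obtain a u v w where a: "a < alph \<Gamma>" and W: "Wit \<Gamma> a u v w" by blast
    have a': "a < length (aut_mult \<Gamma>)" using a k by simp
    obtain u' v' w' where W': "Wit \<Gamma> a u' v' w'" and l: "length u' \<le> 2 ^ (12 * ?c)"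
      "length v' \<le> 2 ^ (12 * ?c)" "length w' \<le> 2 ^ (12 * ?c)"
      using short_wit[OF a' W] by blast
    have inL: "u' \<in> lists {..<alph \<Gamma>}" "v' \<in> lists {..<alph \<Gamma>}" "w' \<in> lists {..<alph \<Gamma>}"
      using W' LA unfolding Wit_def by auto
    have bnd: "list_encode x < Mb ?c" if "x \<in> lists {..<alph \<Gamma>}" "length x \<le> 2 ^ (12 * ?c)" for x
    proof -
      have "list_encode x \<le> CB (alph \<Gamma>) (length x)" using CB_enc that by blast
      also have "\<dots> \<le> CB (alph \<Gamma>) (2 ^ (12 * ?c))" using CB_mono that by blast
      finally show ?thesis by (simp add: Mb_def k pow2_eq)
    qed
    have "Witc ?c a (list_encode u') (list_encode v') (list_encode w')"
      using Witc_correct[OF a'] W' by simp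
    moreover have "list_encode u' < Mb ?c" "list_encode v' < Mb ?c" "list_encode w' < Mb ?c"
      using bnd inL l by simp_all
    ultimately show "\<exists>a < nthc ?c 0. \<exists>i < Mb ?c. \<exists>j < Mb ?c. \<exists>l < Mb ?c. Witc ?c a i j l"
      using a k(1) by auto
  qed
  then show ?thesis using rc_iff[OF sg pre int] by (simp add: Fn_def)
qed

theorem corollary3p3:
  "\<exists>f :: recf. \<forall>(\<Gamma> :: pre_struct) (S :: 'a set) mult.
     semigroup_on S mult \<and> automatic_structure_for \<Gamma> S mult \<longrightarrow>
       eval f [enc_struct \<Gamma>] (if right_cancellative S mult then 1 else 0)"
proof -
  obtain f where f: "\<And>xs. length xs = 1 \<Longrightarrow> eval f xs (Fn (xs ! 0))"
    using rec1_Fn unfolding rec1_def recn_def by blast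
  show ?thesis
  proof (intro exI allI impI)
    fix \<Gamma> :: pre_struct and S :: "'a set" and mult
    assume "semigroup_on S mult \<and> automatic_structure_for \<Gamma> S mult"
    then have "Fn (enc_struct \<Gamma>) = (if right_cancellative S mult then 1 else 0)"
      using Fn_correct by blast
    then show "eval f [enc_struct \<Gamma>] (if right_cancellative S mult then 1 else 0)"
      using f[of "[enc_struct \<Gamma>]"] by simp
  qed
qed

end
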